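(* Let $G$ be a Schur positive tripartite graph. If all stable tripartitions of $G$ have the same type, then every stable tripartition of $G$ is balanced, i.e., its three block sizes pairwise differ by at most $1$.
   Context: For a finite simple graph $G$, the chromatic symmetric function is $X_G=\sum_{\kappa}\prod_{v\in V(G)}x_{\kappa(v)}$ over proper colorings $\kappa:V(G)\to\{1,2,\dots\}$; $G$ is Schur positive if all coefficients of $X_G$ in the Schur basis are nonnegative. A stable tripartition of $G$ is a set partition of $V(G)$ into three stable (independent) sets; its type is the integer partition formed by the three block sizes. A tripartite graph is a graph admitting a stable tripartition. *)

theory Defs
  imports Main "HOL-Library.FuncSet" "HOL-Library.Multiset"
begin

definition simple_graph :: "'a set \<Rightarrow> ('a \<Rightarrow> 'a \<Rightarrow> bool) \<Rightarrow> bool" where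
  "simple_graph V E \<longleftrightarrow> finite V \<and> (\<forall>u v. E u v \<longrightarrow> u \<in> V \<and> v \<in> V)
     \<and> (\<forall>u v. E u v \<longrightarrow> E v u) \<and> (\<forall>v. \<not> E v v)"

definition stable_set :: "('a \<Rightarrow> 'a \<Rightarrow> bool) \<Rightarrow> 'a set \<Rightarrow> bool" where
  "stable_set E S \<longleftrightarrow> (\<forall>u\<in>S. \<forall>v\<in>S. \<not> E u v)"

definition proper_colorings :: "'a set \<Rightarrow> ('a \<Rightarrow> 'a \<Rightarrow> bool) \<Rightarrow> nat \<Rightarrow> ('a \<Rightarrow> nat) set" where
  "proper_colorings V E k = {\<kappa> \<in> V \<rightarrow>\<^sub>E {..<k}. \<forall>u\<in>V. \<forall>v\<in>V. E u v \<longrightarrow> \<kappa> u \<noteq> \<kappa> v}"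

(* coefficient of x^alpha in X_G(x_0,...,x_{k-1}) *)
definition chrom_coeff :: "'a set \<Rightarrow> ('a \<Rightarrow> 'a \<Rightarrow> bool) \<Rightarrow> nat \<Rightarrow> (nat \<Rightarrow> nat) \<Rightarrow> nat" where
  "chrom_coeff V E k \<alpha> = card {\<kappa> \<in> proper_colorings V E k. \<forall>i. card {v\<in>V. \<kappa> v = i} = \<alpha> i}"

definition int_partition :: "nat \<Rightarrow> nat list \<Rightarrow> bool" where
  "int_partition n la \<longleftrightarrow> sorted_wrt (\<ge>) la \<and> (\<forall>p\<in>set la. 0 < p) \<and> sum_list la = n"

definition young_cells :: "nat list \<Rightarrow> (nat \<times> nat) set" where
  "young_cells la = {(i, j). i < length la \<and> j < la ! i}"

definition ssyt :: "nat list \<Rightarrow> nat \<Rightarrow> (nat \<times> nat \<Rightarrow> nat) set" where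
  "ssyt la k = {T \<in> young_cells la \<rightarrow>\<^sub>E {..<k}.
      (\<forall>i j. (i, Suc j) \<in> young_cells la \<longrightarrow> T (i, j) \<le> T (i, Suc j)) \<and>
      (\<forall>i j. (Suc i, j) \<in> young_cells la \<longrightarrow> T (i, j) < T (Suc i, j))}"

(* Kostka number: coefficient of x^alpha in the Schur polynomial s_lambda(x_0,...,x_{k-1}) *)
definition kostka :: "nat list \<Rightarrow> nat \<Rightarrow> (nat \<Rightarrow> nat) \<Rightarrow> nat" where
  "kostka la k \<alpha> = card {T \<in> ssyt la k. \<forall>i. card {c \<in> young_cells la. T c = i} = \<alpha> i}"

(* X_G is homogeneous of degree n = |V|, and the Schur functions s_lambda (lambda |- n)
   remain linearly independent after specialising to n variables, so it suffices to
   compare coefficients of all monomials in x_0,...,x_{n-1}. *)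
definition schur_positive :: "'a set \<Rightarrow> ('a \<Rightarrow> 'a \<Rightarrow> bool) \<Rightarrow> bool" where
  "schur_positive V E \<longleftrightarrow>
     (\<exists>c :: nat list \<Rightarrow> int. (\<forall>la. int_partition (card V) la \<longrightarrow> c la \<ge> 0) \<and>
        (\<forall>\<alpha>. int (chrom_coeff V E (card V) \<alpha>) =
              (\<Sum>la\<in>{la. int_partition (card V) la}. c la * int (kostka la (card V) \<alpha>))))"

definition stable_tripartition :: "'a set \<Rightarrow> ('a \<Rightarrow> 'a \<Rightarrow> bool) \<Rightarrow> 'a set set \<Rightarrow> bool" where
  "stable_tripartition V E P \<longleftrightarrow> card P = 3 \<and> \<Union>P = V \<and>
     (\<forall>B\<in>P. B \<noteq> {} \<and> stable_set E B) \<and>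
     (\<forall>B\<in>P. \<forall>C\<in>P. B \<noteq> C \<longrightarrow> B \<inter> C = {})"

definition tripartite :: "'a set \<Rightarrow> ('a \<Rightarrow> 'a \<Rightarrow> bool) \<Rightarrow> bool" where
  "tripartite V E \<longleftrightarrow> (\<exists>P. stable_tripartition V E P)"

definition partition_type :: "'a set set \<Rightarrow> nat multiset" where
  "partition_type P = image_mset card (mset_set P)"

definition balanced :: "'a set set \<Rightarrow> bool" where
  "balanced P \<longleftrightarrow> (\<forall>B\<in>P. \<forall>C\<in>P. card B \<le> card C + 1)"

end

theory Submission
  imports Defs
begin
lemma pt3: "A\<noteq>B \<Longrightarrow> A\<noteq>C \<Longrightarrow> B\<noteq>C \<Longrightarrow> partition_type {A,B,C} = {#card A, card B, card C#}"
  by (simp add: partition_type_def)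
lemma young_cells_finite: "finite (young_cells la)"
proof -
  have "young_cells la = (SIGMA i:{..<length la}. {..<la!i})" by (auto simp: young_cells_def)
  thus ?thesis by simp
qed
lemma partitions_finite: "finite {la. int_partition n la}"
proof -
  have "{la. int_partition n la} \<subseteq> {xs. set xs \<subseteq> {..n} \<and> length xs \<le> n}"
  proof
    fix la assume "la \<in> {la. int_partition n la}"
    hence a: "sorted_wrt (\<ge>) la" "\<forall>p\<in>set la. 0 < p" "sum_list la = n" by (auto simp: int_partition_def)
    have "set la \<subseteq> {..n}" using a member_le_sum_list by fastforce
    moreover have "length la \<le> sum_list la" using a(2)
      by (induction la) auto
    ultimately show "la \<in> {xs. set xs \<subseteq> {..n} \<and> length xs \<le> n}" using a by auto
  qed
  thus ?thesis using finite_lists_length_le[of "{..n}" n] finite_subset by blast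
qed
lemma tab_move:
  assumes T: "T \<in> ssyt la n"
    and le2: "\<forall>c\<in>young_cells la. T c \<le> 2"
    and cnt: "\<forall>i. card {c \<in> young_cells la. T c = i} = \<mu> i"
    and lt: "\<mu> 2 < \<mu> 1" and n2: "2 < n"
  shows "\<exists>T'\<in>ssyt la n. \<forall>i. card {c \<in> young_cells la. T' c = i} = (\<mu>(1 := \<mu> 1 - 1, 2 := \<mu> 2 + 1)) i"
proof -
  define C where "C = young_cells la"
  have finC: "finite C" using young_cells_finite C_def by simp
  from T have TP: "T \<in> C \<rightarrow>\<^sub>E {..<n}"
    and row: "\<And>i j. (i, Suc j) \<in> C \<Longrightarrow> T (i, j) \<le> T (i, Suc j)"
    and col: "\<And>i j. (Suc i, j) \<in> C \<Longrightarrow> T (i, j) < T (Suc i, j)"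
    by (auto simp: ssyt_def C_def)
  have good: "\<exists>i k. (i,k) \<in> C \<and> T (i,k) = 1 \<and> (Suc i, k) \<notin> C \<and> ((i, Suc k) \<in> C \<longrightarrow> T (i, Suc k) = 2)"
  proof (cases "\<exists>i j. (i,j) \<in> C \<and> T (i,j) = 1 \<and> (Suc i, j) \<notin> C")
    case True
    then obtain i j where ij: "(i,j) \<in> C" "T (i,j) = 1" "(Suc i, j) \<notin> C" by blast
    define K where "K = {k. (i,k) \<in> C \<and> T (i,k) = 1}"
    have finK: "finite K"
    proof -
      have "K \<subseteq> snd ` C" unfolding K_def by force
      thus ?thesis using finC finite_subset by blast
    qed
    have jK: "j \<in> K" using ij K_def by simp
    define k where "k = Max K"
    have kK: "k \<in> K" using finK jK k_def Max_in by blast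
    have jk: "j \<le> k" using finK jK k_def by simp
    have "(Suc i, k) \<notin> C" using ij(3) jk by (auto simp: C_def young_cells_def)
    moreover have "(i, Suc k) \<in> C \<longrightarrow> T (i, Suc k) = 2"
    proof
      assume a: "(i, Suc k) \<in> C"
      have "T (i, Suc k) \<ge> 1" using row[OF a] kK K_def by simp
      moreover have "T (i, Suc k) \<noteq> 1"
      proof
        assume "T (i, Suc k) = 1"
        hence "Suc k \<in> K" using a K_def by simp
        hence "Suc k \<le> k" using finK k_def by simp
        thus False by simp
      qed
      moreover have "T (i, Suc k) \<le> 2" using le2 a C_def by simp
      ultimately show "T (i, Suc k) = 2" by simp
    qed
    ultimately show ?thesis using kK K_def by blast
  next
    case False
    define S1 where "S1 = {c \<in> C. T c = 1}"
    define S2 where "S2 = {c \<in> C. T c = 2}"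
    have "card S1 \<le> card S2"
    proof (rule card_inj_on_le)
      show "inj_on (\<lambda>(i,j). (Suc i, j)) S1" by (auto simp: inj_on_def)
      show "(\<lambda>(i,j). (Suc i, j)) ` S1 \<subseteq> S2"
      proof
        fix x assume "x \<in> (\<lambda>(i,j). (Suc i, j)) ` S1"
        then obtain i j where x: "x = (Suc i, j)" "(i,j) \<in> C" "T (i,j) = 1" unfolding S1_def by auto
        have xC: "(Suc i, j) \<in> C" using False x by blast
        have "T (Suc i, j) > 1" using col[OF xC] x by simp
        moreover have "T (Suc i, j) \<le> 2" using le2 xC C_def by simp
        ultimately show "x \<in> S2" using x xC S2_def by simp
      qed
      show "finite S2" using finC S2_def by simp
    qed
    moreover have "card S1 = \<mu> 1" "card S2 = \<mu> 2" using cnt S1_def S2_def C_def by auto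
    ultimately show ?thesis using lt by simp
  qed
  then obtain i k where ik: "(i,k) \<in> C" "T (i,k) = 1" "(Suc i, k) \<notin> C"
     "(i, Suc k) \<in> C \<longrightarrow> T (i, Suc k) = 2" by blast
  define T' where "T' = T((i,k) := 2)"
  have "T' \<in> ssyt la n"
    unfolding ssyt_def
  proof (intro CollectI conjI allI impI)
    show "T' \<in> young_cells la \<rightarrow>\<^sub>E {..<n}" using TP ik(1) n2
      by (auto simp: T'_def C_def PiE_def extensional_def)
  next
    fix i' j' assume a: "(i', Suc j') \<in> young_cells la"
    show "T' (i', j') \<le> T' (i', Suc j')"
      using row[of i' j'] a ik by (auto simp: T'_def C_def)
  next
    fix i' j' assume a: "(Suc i', j') \<in> young_cells la"
    show "T' (i', j') < T' (Suc i', j')"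
      using col[of i' j'] a ik n2 by (auto simp: T'_def C_def)
  qed
  moreover have "\<forall>v. card {c \<in> young_cells la. T' c = v} = (\<mu>(1 := \<mu> 1 - 1, 2 := \<mu> 2 + 1)) v"
  proof
    fix v
    have e: "{c\<in>C. T' c = v} = (if v = 1 then {c\<in>C. T c = 1} - {(i,k)} else if v = 2 then insert (i,k) {c\<in>C. T c = 2} else {c\<in>C. T c = v})"
      using ik by (auto simp: T'_def)
    have c1: "card {c\<in>C. T c = 1} = \<mu> 1" "card {c\<in>C. T c = 2} = \<mu> 2" "card {c\<in>C. T c = v} = \<mu> v"
      using cnt C_def by auto
    show "card {c \<in> young_cells la. T' c = v} = (\<mu>(1 := \<mu> 1 - 1, 2 := \<mu> 2 + 1)) v"
    proof -
      have "card {c\<in>C. T' c = v} = (\<mu>(1 := \<mu> 1 - 1, 2 := \<mu> 2 + 1)) v"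
      proof (cases "v = 1")
        case True
        thus ?thesis using e c1 ik finC by simp
      next
        case False
        show ?thesis
        proof (cases "v = 2")
          case True
          have "card (insert (i,k) {c\<in>C. T c = 2}) = Suc (card {c\<in>C. T c = 2})"
            using finC ik(2) by simp
          thus ?thesis using e c1 True by simp
        next
          case False2: False
          thus ?thesis using e c1 False by simp
        qed
      qed
      thus ?thesis using C_def by simp
    qed
  qed
  ultimately show ?thesis by blast
qed
theorem lemma3p5:
  fixes V :: "'a set" and E :: "'a \<Rightarrow> 'a \<Rightarrow> bool"
  assumes "simple_graph V E"
    and "schur_positive V E"
    and "tripartite V E"
    and "\<forall>P Q. stable_tripartition V E P \<and> stable_tripartition V E Q
               \<longrightarrow> partition_type P = partition_type Q"
  shows "\<forall>P. stable_tripartition V E P \<longrightarrow> balanced P"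
proof (intro allI impI)
  fix P assume sP: "stable_tripartition V E P"
  show "balanced P"
  proof (rule ccontr)
    assume "\<not> balanced P"
    then obtain X Z where XP: "X\<in>P" "Z\<in>P" and gt: "card Z + 1 < card X"
      unfolding balanced_def by (meson not_le)
    from sP have c3: "card P = 3" "\<Union>P = V" "\<forall>B\<in>P. B \<noteq> {} \<and> stable_set E B"
      "\<forall>B\<in>P. \<forall>C\<in>P. B\<noteq>C \<longrightarrow> B\<inter>C={}" by (auto simp: stable_tripartition_def)
    have XZ: "X \<noteq> Z" using gt by auto
    have finP: "finite P" using c3(1) card.infinite by fastforce
    have "card (P - {X,Z}) = 1" using c3(1) XP XZ finP by (simp add: card_Diff_subset)
    then obtain Y where "P - {X,Z} = {Y}" by (auto simp: card_1_singleton_iff)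
    hence Y: "Y\<in>P" "Y\<noteq>X" "Y\<noteq>Z" "P = {X,Y,Z}" using XP by auto
    have finV: "finite V" using assms(1) by (simp add: simple_graph_def)
    have sub: "X \<subseteq> V" "Y \<subseteq> V" "Z \<subseteq> V" using c3(2) XP Y by auto
    have VU: "V = X \<union> Y \<union> Z" using c3(2) Y(4) by auto
    have disj: "X \<inter> Y = {}" "X \<inter> Z = {}" "Y \<inter> Z = {}" using c3(4) XP Y XZ by auto
    have stab: "stable_set E X" "stable_set E Y" "stable_set E Z" using c3(3) XP Y by auto
    have neY: "Y \<noteq> {}" using c3(3) Y by auto
    define n where "n = card V"
    have "card X \<le> n" using sub finV card_mono n_def by blast
    moreover have "card Z > 0" using c3(3) XP sub finV finite_subset by (metis card_gt_0_iff)
    ultimately have n2: "2 < n" using gt by simp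
    define \<mu> where "\<mu> = (\<lambda>i::nat. if i = 0 then card Y else if i = 1 then card X else if i = 2 then card Z else 0)"
    define \<kappa> where "\<kappa> = (\<lambda>v. if v \<in> Y then 0 else if v \<in> X then 1 else if v \<in> Z then (2::nat) else undefined)"
    have \<kappa>P: "\<kappa> \<in> proper_colorings V E n"
      unfolding proper_colorings_def
    proof (intro CollectI conjI ballI impI)
      show "\<kappa> \<in> V \<rightarrow>\<^sub>E {..<n}" using VU n2 by (auto simp: \<kappa>_def PiE_def extensional_def)
    next
      fix u v assume uv: "u \<in> V" "v \<in> V" "E u v"
      show "\<kappa> u \<noteq> \<kappa> v" using uv VU disj stab by (auto simp: \<kappa>_def stable_set_def)
    qed
    have \<kappa>c: "\<forall>i. card {v\<in>V. \<kappa> v = i} = \<mu> i"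
    proof
      fix i
      have "{v\<in>V. \<kappa> v = i} = (if i = 0 then Y else if i = 1 then X else if i = 2 then Z else {})"
        using VU disj by (auto simp: \<kappa>_def)
      thus "card {v\<in>V. \<kappa> v = i} = \<mu> i" by (simp add: \<mu>_def)
    qed
    have finPC: "finite (proper_colorings V E n)"
      using finite_PiE[of V "\<lambda>_. {..<n}"] finV
      by (rule_tac finite_subset[of _ "V \<rightarrow>\<^sub>E {..<n}"]) (auto simp: proper_colorings_def)
    have N1: "chrom_coeff V E n \<mu> > 0"
      unfolding chrom_coeff_def using \<kappa>P \<kappa>c finPC by (subst card_gt_0_iff) auto
    obtain c :: "nat list \<Rightarrow> int" where cpos: "\<forall>la. int_partition n la \<longrightarrow> c la \<ge> 0"
      and ceq: "\<forall>\<alpha>. int (chrom_coeff V E n \<alpha>) =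
              (\<Sum>la\<in>{la. int_partition n la}. c la * int (kostka la n \<alpha>))"
      using assms(2) unfolding schur_positive_def n_def by blast
    define L where "L = {la. int_partition n la}"
    have finL: "finite L" using partitions_finite L_def by simp
    have "\<exists>la\<in>L. c la * int (kostka la n \<mu>) > 0"
    proof (rule ccontr)
      assume "\<not> ?thesis"
      hence "(\<Sum>la\<in>L. c la * int (kostka la n \<mu>)) \<le> 0" by (intro sum_nonpos) auto
      thus False using ceq N1 L_def by (metis of_nat_0_less_iff not_le)
    qed
    then obtain \<nu> where \<nu>L: "\<nu> \<in> L" and pr: "c \<nu> * int (kostka \<nu> n \<mu>) > 0" by blast
    have c\<nu>: "c \<nu> > 0" and K\<nu>: "kostka \<nu> n \<mu> > 0"
      using pr cpos \<nu>L L_def by (auto simp: zero_less_mult_iff)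
    hence "{T \<in> ssyt \<nu> n. \<forall>i. card {c \<in> young_cells \<nu>. T c = i} = \<mu> i} \<noteq> {}"
      unfolding kostka_def by (metis card.empty less_irrefl)
    then obtain T where T: "T \<in> ssyt \<nu> n" "\<forall>i. card {c \<in> young_cells \<nu>. T c = i} = \<mu> i"
      by blast
    have le2: "\<forall>x\<in>young_cells \<nu>. T x \<le> 2"
    proof
      fix x assume x: "x \<in> young_cells \<nu>"
      show "T x \<le> 2"
      proof (rule ccontr)
        assume "\<not> T x \<le> 2"
        hence "\<mu> (T x) = 0" by (simp add: \<mu>_def)
        hence "card {c \<in> young_cells \<nu>. T c = T x} = 0" using T(2) by simp
        moreover have "finite {c \<in> young_cells \<nu>. T c = T x}" using young_cells_finite by simp
        ultimately show False using x by (metis (mono_tags, lifting) card_0_eq empty_iff mem_Collect_eq)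
      qed
    qed
    obtain T' where T': "T' \<in> ssyt \<nu> n"
      "\<forall>i. card {c \<in> young_cells \<nu>. T' c = i} = (\<mu>(1 := \<mu> 1 - 1, 2 := \<mu> 2 + 1)) i"
      using tab_move[OF T(1) le2 T(2) _ n2] gt by (auto simp: \<mu>_def)
    define \<alpha> where "\<alpha> = \<mu>(1 := \<mu> 1 - 1, 2 := \<mu> 2 + 1)"
    have finS: "finite (ssyt \<nu> n)"
      using finite_PiE[of "young_cells \<nu>" "\<lambda>_. {..<n}"] young_cells_finite
      by (rule_tac finite_subset[of _ "young_cells \<nu> \<rightarrow>\<^sub>E {..<n}"]) (auto simp: ssyt_def)
    have K\<alpha>: "kostka \<nu> n \<alpha> > 0"
      unfolding kostka_def using T' finS \<alpha>_def by (subst card_gt_0_iff) auto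
    have "c \<nu> * int (kostka \<nu> n \<alpha>) \<le> (\<Sum>la\<in>L. c la * int (kostka la n \<alpha>))"
      using \<nu>L finL cpos L_def by (intro member_le_sum) auto
    moreover have "c \<nu> * int (kostka \<nu> n \<alpha>) > 0" using c\<nu> K\<alpha> by simp
    ultimately have "int (chrom_coeff V E n \<alpha>) > 0" using ceq L_def by simp
    hence "chrom_coeff V E n \<alpha> > 0" by simp
    hence "{\<kappa> \<in> proper_colorings V E n. \<forall>i. card {v\<in>V. \<kappa> v = i} = \<alpha> i} \<noteq> {}"
      unfolding chrom_coeff_def by (metis card.empty less_irrefl)
    then obtain \<kappa>' where \<kappa>'P: "\<kappa>' \<in> proper_colorings V E n"
      and \<kappa>'c: "\<forall>i. card {v\<in>V. \<kappa>' v = i} = \<alpha> i"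
      by blast
    define B where "B = (\<lambda>i. {v\<in>V. \<kappa>' v = i})"
    have cB: "card (B 0) = card Y" "card (B 1) = card X - 1" "card (B 2) = card Z + 1"
      using \<kappa>'c by (auto simp: B_def \<alpha>_def \<mu>_def)
    have "card Y > 0" using neY finV sub(2) finite_subset card_gt_0_iff by blast
    hence ne: "B 0 \<noteq> {}" "B 1 \<noteq> {}" "B 2 \<noteq> {}"
      using cB gt by (auto simp del: One_nat_def)
    have big: "\<And>i. i \<ge> 3 \<Longrightarrow> B i = {}"
    proof -
      fix i :: nat assume "i \<ge> 3"
      hence "card (B i) = 0" using \<kappa>'c by (simp add: B_def \<alpha>_def \<mu>_def)
      moreover have "finite (B i)" using finV by (simp add: B_def)
      ultimately show "B i = {}" by simp
    qed
    have dist: "B 0 \<noteq> B 1" "B 0 \<noteq> B 2" "B 1 \<noteq> B 2" using ne by (auto simp: B_def)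
    define Q where "Q = {B 0, B 1, B 2}"
    have sQ: "stable_tripartition V E Q"
      unfolding stable_tripartition_def
    proof (intro conjI ballI impI)
      show "card Q = 3" using dist Q_def by simp
      show "\<Union>Q = V"
      proof
        show "\<Union>Q \<subseteq> V" by (auto simp: Q_def B_def)
        show "V \<subseteq> \<Union>Q"
        proof
          fix v assume v: "v \<in> V"
          have "\<kappa>' v < 3"
          proof (rule ccontr)
            assume "\<not> \<kappa>' v < 3"
            hence "B (\<kappa>' v) = {}" using big by simp
            thus False using v B_def by auto
          qed
          hence "\<kappa>' v = 0 \<or> \<kappa>' v = 1 \<or> \<kappa>' v = 2" by auto
          thus "v \<in> \<Union>Q" using v by (auto simp: Q_def B_def)
        qed
      qed
      fix D assume D: "D \<in> Q"
      show "D \<noteq> {}" using D ne Q_def by auto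
      show "stable_set E D" using D \<kappa>'P
        unfolding Q_def B_def stable_set_def proper_colorings_def by (auto; metis)
    next
      fix D D' assume "D \<in> Q" "D' \<in> Q" "D \<noteq> D'"
      thus "D \<inter> D' = {}" by (auto simp: Q_def B_def)
    qed
    have "partition_type P = partition_type Q" using assms(4) sP sQ by blast
    moreover have "partition_type P = {#card X, card Y, card Z#}"
      using Y XZ pt3[of X Y Z] by simp
    moreover have "partition_type Q = {#card Y, card X - 1, card Z + 1#}"
      using pt3[OF dist] cB Q_def by simp
    ultimately have M: "{#card X, card Y, card Z#} = {#card Y, card X - 1, card Z + 1#}" by simp
    have m1: "card X - 1 \<in># {#card Y, card X - 1, card Z + 1#}" by simp
    have "card X - 1 \<in># {#card X, card Y, card Z#}" by (simp only: M m1)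
    hence a1: "card X - 1 = card X \<or> card X - 1 = card Y \<or> card X - 1 = card Z" by simp
    have m2: "card X \<in># {#card X, card Y, card Z#}" by simp
    have "card X \<in># {#card Y, card X - 1, card Z + 1#}" by (simp only: M[symmetric] m2)
    hence a2: "card X = card Y \<or> card X = card X - 1 \<or> card X = card Z + 1" by simp
    show False using a1 a2 gt by linarith
  qed
qed
end
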